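(* Let $G$ be a graph of order $n\ge 2$. Then $\gamma^{SLD}(G)=n$ if and only if every maximal vertex of the vicinal preorder of $G$ has a twin.
   Context: All graphs are finite, simple and undirected (not necessarily connected). For $u\in V$, $N(u)$ is the set of neighbours of $u$ and $N[u]=N(u)\cup\{u\}$. A code is a non-empty subset $C\subseteq V$; $I(C;u)=N[u]\cap C$. A code $C$ is self-locating-dominating if for every $u\in V\setminus C$ we have $I(C;u)\neq\emptyset$ and $\bigcap_{c\in I(C;u)}N[c]=\{u\}$; $\gamma^{SLD}(G)$ is the minimum size of such a code. The vicinal preorder $\lesssim$ on $V(G)$ is defined by $x\lesssim y$ iff $N(x)\subseteq N[y]$. Write $x<y$ if $x\lesssim y$ and not $y\lesssim x$. A vertex $x$ is maximal if there is no vertex $y$ with $x<y$. Distinct vertices $u,v$ are twins if $N(u)=N(v)$ (false twins) or $N[u]=N[v]$ (true twins). *)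

theory Defs
  imports Main
begin

definition graph :: "'a set \<Rightarrow> ('a \<Rightarrow> 'a \<Rightarrow> bool) \<Rightarrow> bool" where
  "graph V E \<longleftrightarrow> finite V \<and> (\<forall>u v. E u v \<longrightarrow> E v u) \<and> (\<forall>u. \<not> E u u)
     \<and> (\<forall>u v. E u v \<longrightarrow> u \<in> V \<and> v \<in> V)"

definition nbhd :: "'a set \<Rightarrow> ('a \<Rightarrow> 'a \<Rightarrow> bool) \<Rightarrow> 'a \<Rightarrow> 'a set" where
  "nbhd V E u = {v \<in> V. E u v}"

definition cnbhd :: "'a set \<Rightarrow> ('a \<Rightarrow> 'a \<Rightarrow> bool) \<Rightarrow> 'a \<Rightarrow> 'a set" where
  "cnbhd V E u = insert u (nbhd V E u)"

definition is_SLD :: "'a set \<Rightarrow> ('a \<Rightarrow> 'a \<Rightarrow> bool) \<Rightarrow> 'a set \<Rightarrow> bool" where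
  "is_SLD V E C \<longleftrightarrow> C \<noteq> {} \<and> C \<subseteq> V \<and>
     (\<forall>u \<in> V - C. cnbhd V E u \<inter> C \<noteq> {} \<and>
        (\<Inter>c \<in> cnbhd V E u \<inter> C. cnbhd V E c) = {u})"

definition gamma_SLD :: "'a set \<Rightarrow> ('a \<Rightarrow> 'a \<Rightarrow> bool) \<Rightarrow> nat" where
  "gamma_SLD V E = Min (card ` {C. is_SLD V E C})"

definition vic_le :: "'a set \<Rightarrow> ('a \<Rightarrow> 'a \<Rightarrow> bool) \<Rightarrow> 'a \<Rightarrow> 'a \<Rightarrow> bool" where
  "vic_le V E x y \<longleftrightarrow> nbhd V E x \<subseteq> cnbhd V E y"

definition vic_less :: "'a set \<Rightarrow> ('a \<Rightarrow> 'a \<Rightarrow> bool) \<Rightarrow> 'a \<Rightarrow> 'a \<Rightarrow> bool" where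
  "vic_less V E x y \<longleftrightarrow> vic_le V E x y \<and> \<not> vic_le V E y x"

definition vic_maximal :: "'a set \<Rightarrow> ('a \<Rightarrow> 'a \<Rightarrow> bool) \<Rightarrow> 'a \<Rightarrow> bool" where
  "vic_maximal V E x \<longleftrightarrow> x \<in> V \<and> \<not> (\<exists>y \<in> V. vic_less V E x y)"

definition twins :: "'a set \<Rightarrow> ('a \<Rightarrow> 'a \<Rightarrow> bool) \<Rightarrow> 'a \<Rightarrow> 'a \<Rightarrow> bool" where
  "twins V E u v \<longleftrightarrow> u \<noteq> v \<and> (nbhd V E u = nbhd V E v \<or> cnbhd V E u = cnbhd V E v)"

end

theory Submission
  imports Defs
begin

lemma sym_mem: "graph V E \<Longrightarrow> u \<in> V \<Longrightarrow> c \<in> cnbhd V E u \<Longrightarrow> u \<in> cnbhd V E c"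
  unfolding graph_def cnbhd_def nbhd_def by auto

lemma cn_sub: "graph V E \<Longrightarrow> c \<in> V \<Longrightarrow> cnbhd V E c \<subseteq> V"
  unfolding graph_def cnbhd_def nbhd_def by auto

lemma SLD_mono:
  assumes g: "graph V E" and s: "is_SLD V E C" and cd: "C \<subseteq> D" and dv: "D \<subseteq> V"
  shows "is_SLD V E D"
  unfolding is_SLD_def
proof (intro conjI ballI)
  show "D \<noteq> {}" using s cd unfolding is_SLD_def by auto
  show "D \<subseteq> V" by fact
  fix u assume u: "u \<in> V - D"
  then have uc: "u \<in> V - C" using cd by auto
  have "cnbhd V E u \<inter> C \<noteq> {}" using s uc unfolding is_SLD_def by blast
  then show "cnbhd V E u \<inter> D \<noteq> {}" using cd by blast
  have eq: "(\<Inter>c \<in> cnbhd V E u \<inter> C. cnbhd V E c) = {u}" using s uc unfolding is_SLD_def by auto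
  have "(\<Inter>c \<in> cnbhd V E u \<inter> D. cnbhd V E c) \<subseteq> (\<Inter>c \<in> cnbhd V E u \<inter> C. cnbhd V E c)"
    using cd by auto
  moreover have "u \<in> (\<Inter>c \<in> cnbhd V E u \<inter> D. cnbhd V E c)"
    using sym_mem[OF g] u by auto
  ultimately show "(\<Inter>c \<in> cnbhd V E u \<inter> D. cnbhd V E c) = {u}" using eq by auto
qed

lemma V_SLD: "graph V E \<Longrightarrow> V \<noteq> {} \<Longrightarrow> is_SLD V E V"
  unfolding is_SLD_def by auto

lemma gamma_char:
  assumes g: "graph V E" and n: "card V \<ge> 2"
  shows "gamma_SLD V E = card V \<longleftrightarrow> (\<forall>x\<in>V. \<not> is_SLD V E (V - {x}))"
proof -
  have fin: "finite V" using g unfolding graph_def by auto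
  have ne: "V \<noteq> {}" using n by auto
  let ?S = "card ` {C. is_SLD V E C}"
  have finS: "finite ?S"
  proof -
    have "{C. is_SLD V E C} \<subseteq> Pow V" unfolding is_SLD_def by auto
    then show ?thesis using fin by (meson finite_Pow_iff finite_imageI finite_subset)
  qed
  have inS: "card V \<in> ?S" using V_SLD[OF g ne] by auto
  have le: "\<forall>k\<in>?S. k \<le> card V" unfolding is_SLD_def using fin by (auto intro: card_mono)
  show ?thesis
  proof
    assume h: "gamma_SLD V E = card V"
    show "\<forall>x\<in>V. \<not> is_SLD V E (V - {x})"
    proof (intro ballI notI)
      fix x assume x: "x \<in> V" and s: "is_SLD V E (V - {x})"
      then have "card (V - {x}) \<in> ?S" by blast
      then have "Min ?S \<le> card (V - {x})" using finS by auto
      moreover have "card (V - {x}) < card V" using fin x by (rule card_Diff1_less)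
      ultimately show False using h unfolding gamma_SLD_def by auto
    qed
  next
    assume h: "\<forall>x\<in>V. \<not> is_SLD V E (V - {x})"
    have "\<forall>k\<in>?S. k = card V"
    proof
      fix k assume "k \<in> ?S"
      then obtain C where s: "is_SLD V E C" and k: "k = card C" by auto
      have cv: "C \<subseteq> V" using s unfolding is_SLD_def by auto
      show "k = card V"
      proof (cases "C = V")
        case True then show ?thesis using k by simp
      next
        case False
        then obtain x where x: "x \<in> V" "x \<notin> C" using cv by auto
        then have "is_SLD V E (V - {x})" by (intro SLD_mono[OF g s]) (use cv in auto)
        then show ?thesis using h x by auto
      qed
    qed
    then show "gamma_SLD V E = card V" unfolding gamma_SLD_def using finS inS
      by (metis Min_in empty_iff)
  qed
qed

lemma del_char:
  assumes g: "graph V E" and n: "card V \<ge> 2" and x: "x \<in> V"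
  shows "is_SLD V E (V - {x}) \<longleftrightarrow>
     nbhd V E x \<noteq> {} \<and> (\<forall>y\<in>V. y \<noteq> x \<longrightarrow> \<not> vic_le V E x y)"
proof -
  have ne: "V - {x} \<noteq> {}"
  proof
    assume "V - {x} = {}"
    then have "V \<subseteq> {x}" by auto
    then have "card V \<le> card {x}" using card_mono[of "{x}" V] by simp
    then show False using n by simp
  qed
  have int: "cnbhd V E x \<inter> (V - {x}) = nbhd V E x" using g unfolding graph_def cnbhd_def nbhd_def by auto
  have mem: "\<And>y. y \<in> V \<Longrightarrow> y \<in> (\<Inter>c \<in> nbhd V E x. cnbhd V E c) \<longleftrightarrow> vic_le V E x y"
    using g unfolding vic_le_def cnbhd_def nbhd_def graph_def by auto
  have sub: "(\<Inter>c \<in> nbhd V E x. cnbhd V E c) \<subseteq> V" if "nbhd V E x \<noteq> {}"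
    using that cn_sub[OF g] unfolding nbhd_def by blast
  have xin: "x \<in> (\<Inter>c \<in> nbhd V E x. cnbhd V E c)"
    using g x unfolding cnbhd_def nbhd_def graph_def by auto
  have "is_SLD V E (V - {x}) \<longleftrightarrow> nbhd V E x \<noteq> {} \<and> (\<Inter>c \<in> nbhd V E x. cnbhd V E c) = {x}"
  proof -
    have vv: "V - (V - {x}) = {x}" using x by auto
    show ?thesis unfolding is_SLD_def vv using ne int by simp
  qed
  also have "\<dots> \<longleftrightarrow> nbhd V E x \<noteq> {} \<and> (\<forall>y\<in>V. y \<noteq> x \<longrightarrow> \<not> vic_le V E x y)"
  proof
    assume "nbhd V E x \<noteq> {} \<and> (\<Inter>c \<in> nbhd V E x. cnbhd V E c) = {x}"
    then show "nbhd V E x \<noteq> {} \<and> (\<forall>y\<in>V. y \<noteq> x \<longrightarrow> \<not> vic_le V E x y)" using mem by auto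
  next
    assume h: "nbhd V E x \<noteq> {} \<and> (\<forall>y\<in>V. y \<noteq> x \<longrightarrow> \<not> vic_le V E x y)"
    then have "(\<Inter>c \<in> nbhd V E x. cnbhd V E c) \<subseteq> {x}" using mem sub by blast
    then show "nbhd V E x \<noteq> {} \<and> (\<Inter>c \<in> nbhd V E x. cnbhd V E c) = {x}" using h xin by blast
  qed
  finally show ?thesis .
qed

theorem mainTheorem5:
  fixes V :: "'a set" and E :: "'a \<Rightarrow> 'a \<Rightarrow> bool"
  assumes "graph V E" and "card V \<ge> 2"
  shows "gamma_SLD V E = card V \<longleftrightarrow>
         (\<forall>x. vic_maximal V E x \<longrightarrow> (\<exists>y \<in> V. twins V E x y))"
proof -
  note g = assms(1) and n = assms(2)
  have fin: "finite V" using g unfolding graph_def by auto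
  have P: "gamma_SLD V E = card V \<longleftrightarrow>
     (\<forall>x\<in>V. nbhd V E x = {} \<or> (\<exists>y\<in>V. y \<noteq> x \<and> vic_le V E x y))"
  proof -
    have "(\<forall>x\<in>V. \<not> is_SLD V E (V - {x})) \<longleftrightarrow>
     (\<forall>x\<in>V. nbhd V E x = {} \<or> (\<exists>y\<in>V. y \<noteq> x \<and> vic_le V E x y))"
      using del_char[OF g n] by auto
    then show ?thesis using gamma_char[OF g n] by simp
  qed
  have sym: "\<And>u v. E u v \<Longrightarrow> E v u" and irr: "\<And>u. \<not> E u u" and inV: "\<And>u v. E u v \<Longrightarrow> u \<in> V \<and> v \<in> V"
    using g unfolding graph_def by auto
  show ?thesis unfolding P
  proof
    assume h: "\<forall>x\<in>V. nbhd V E x = {} \<or> (\<exists>y\<in>V. y \<noteq> x \<and> vic_le V E x y)"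
    show "\<forall>x. vic_maximal V E x \<longrightarrow> (\<exists>y \<in> V. twins V E x y)"
    proof (intro allI impI)
      fix x assume m: "vic_maximal V E x"
      then have x: "x \<in> V" and nm: "\<And>y. y \<in> V \<Longrightarrow> vic_le V E x y \<Longrightarrow> vic_le V E y x"
        unfolding vic_maximal_def vic_less_def by auto
      show "\<exists>y \<in> V. twins V E x y"
      proof (cases "nbhd V E x = {}")
        case True
        obtain y where y: "y \<in> V" "y \<noteq> x"
        proof -
          have "\<not> V \<subseteq> {x}"
          proof
            assume "V \<subseteq> {x}"
            then have "card V \<le> card {x}" using card_mono[of "{x}" V] by simp
            then show False using n by simp
          qed
          then show ?thesis using that by auto
        qed
        have "vic_le V E x y" using True unfolding vic_le_def by auto
        then have "vic_le V E y x" using nm y by auto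
        then have "nbhd V E y = {}" using True y irr unfolding vic_le_def cnbhd_def nbhd_def by (blast dest: sym)
        then show ?thesis using True y unfolding twins_def by auto
      next
        case False
        then obtain y where y: "y \<in> V" "y \<noteq> x" "vic_le V E x y" using h x by auto
        then have yx: "vic_le V E y x" using nm by auto
        show ?thesis
        proof (cases "E x y")
          case True
          have "cnbhd V E x = cnbhd V E y"
            using y(3) yx True x y(1) inV unfolding vic_le_def cnbhd_def nbhd_def by (blast dest: sym)
          then show ?thesis using y unfolding twins_def by auto
        next
          case False
          have "nbhd V E x = nbhd V E y"
            using y(3) yx False unfolding vic_le_def cnbhd_def nbhd_def by (blast dest: sym)
          then show ?thesis using y unfolding twins_def by auto
        qed
      qed
    qed
  next
    assume h: "\<forall>x. vic_maximal V E x \<longrightarrow> (\<exists>y \<in> V. twins V E x y)"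
    show "\<forall>x\<in>V. nbhd V E x = {} \<or> (\<exists>y\<in>V. y \<noteq> x \<and> vic_le V E x y)"
    proof (rule ballI, rule ccontr)
      fix x assume x: "x \<in> V" and c: "\<not> (nbhd V E x = {} \<or> (\<exists>y\<in>V. y \<noteq> x \<and> vic_le V E x y))"
      have "vic_maximal V E x"
        unfolding vic_maximal_def vic_less_def using x c by auto
      then obtain y where y: "y \<in> V" "twins V E x y" using h by auto
      then have "vic_le V E x y" unfolding twins_def vic_le_def cnbhd_def by blast
      then show False using c y unfolding twins_def by auto
    qed
  qed
qed

end
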